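(* Let $G$ be a BTB graph and $d\ge1$. Sending a circuit configuration $(V,\mu)$ on $G$ with vectors in $\mathbb C^{d+1}$ to the map $w\mapsto[V(w)]\in\mathbb{CP}^d$ induces a one-to-one correspondence between gauge-equivalence classes of circuit configurations on $G$ and TCD maps on $G$ into $\mathbb{CP}^d$.
   Context: A BTB graph is a planar bipartite graph (black $B$, white $W$, edges $E$) embedded in a disk or cactus with every black vertex of degree $3$. A TCD map is $T:W\to\mathbb{CP}^d$ such that for each black vertex the images of its three white neighbours are pairwise distinct and lie on a common line. A vector-relation configuration (VRC) on $G$ is a pair consisting of nonzero vectors $V(w)\in\mathbb C^{d+1}$ for $w\in W$ and, for each black vertex $b$, a linear relation $\sum_{bw\in E}\mu(bw)V(w)=0$ with edge weights $\mu(bw)\in\mathbb C$. It is a circuit configuration if for every $b$ the vectors $\{V(w):bw\in E\}$ form a circuit (a minimal linearly dependent set). A gauge transformation, given by $\lambda:B\sqcup W\to\mathbb C^*$, sends $V(w)\mapsto\lambda(w)V(w)$, the relation at $b$ to $\lambda(b)$ times it, and $\mu(bw)\mapsto\lambda(b)\lambda(w)^{-1}\mu(bw)$. *)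

theory Defs
  imports "HOL-Analysis.Analysis"
begin

(* Combinatorial part of a BTB graph: finite bipartite graph with black vertices B,
   white vertices W, edges E \<subseteq> B \<times> W, every black vertex of degree 3.
   (The planar embedding in a disk/cactus is not modelled.) *)
definition nbrs :: "('b \<times> 'w) set \<Rightarrow> 'b \<Rightarrow> 'w set" where
  "nbrs E b = {w. (b, w) \<in> E}"

definition btb_graph :: "'b set \<Rightarrow> 'w set \<Rightarrow> ('b \<times> 'w) set \<Rightarrow> bool" where
  "btb_graph B W E \<longleftrightarrow> finite B \<and> finite W \<and> E \<subseteq> B \<times> W \<and>
     (\<forall>b\<in>B. card (nbrs E b) = 3)"

definition proj_pt :: "complex^'n::finite \<Rightarrow> (complex^'n::finite) set" where
  "proj_pt v = {c *s v | c. c \<noteq> 0}"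

definition proj_space :: "((complex^'n::finite) set) set" where
  "proj_space = {proj_pt v | v. v \<noteq> 0}"

definition on_common_line :: "((complex^'n::finite) set) set \<Rightarrow> bool" where
  "on_common_line P \<longleftrightarrow> (\<exists>L. vec.subspace L \<and> vec.dim L = 2 \<and> (\<forall>p\<in>P. p \<subseteq> L))"

definition tcd_maps :: "'b set \<Rightarrow> 'w set \<Rightarrow> ('b \<times> 'w) set \<Rightarrow> ('w \<Rightarrow> (complex^'n::finite) set) set" where
  "tcd_maps B W E = {T. T \<in> extensional W \<and> (\<forall>w\<in>W. T w \<in> proj_space) \<and>
     (\<forall>b\<in>B. (\<forall>w1\<in>nbrs E b. \<forall>w2\<in>nbrs E b. w1 \<noteq> w2 \<longrightarrow> T w1 \<noteq> T w2) \<and>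
             on_common_line (T ` nbrs E b))}"

definition fam_dependent :: "'w set \<Rightarrow> ('w \<Rightarrow> complex^'n::finite) \<Rightarrow> bool" where
  "fam_dependent S V \<longleftrightarrow> (\<exists>c. (\<Sum>w\<in>S. c w *s V w) = 0 \<and> (\<exists>w\<in>S. c w \<noteq> 0))"

definition is_circuit :: "'w set \<Rightarrow> ('w \<Rightarrow> complex^'n::finite) \<Rightarrow> bool" where
  "is_circuit S V \<longleftrightarrow> fam_dependent S V \<and> (\<forall>S'. S' \<subset> S \<longrightarrow> \<not> fam_dependent S' V)"

type_synonym ('b, 'w, 'n) config = "('w \<Rightarrow> complex^'n) \<times> ('b \<times> 'w \<Rightarrow> complex)"

definition is_vrc :: "'b set \<Rightarrow> 'w set \<Rightarrow> ('b \<times> 'w) set \<Rightarrow> ('b, 'w, 'n::finite) config \<Rightarrow> bool" where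
  "is_vrc B W E C \<longleftrightarrow> (\<forall>w\<in>W. fst C w \<noteq> 0) \<and>
     (\<forall>b\<in>B. (\<Sum>w\<in>nbrs E b. snd C (b, w) *s fst C w) = 0 \<and> (\<exists>w\<in>nbrs E b. snd C (b, w) \<noteq> 0))"

definition circuit_configs :: "'b set \<Rightarrow> 'w set \<Rightarrow> ('b \<times> 'w) set \<Rightarrow> ('b, 'w, 'n::finite) config set" where
  "circuit_configs B W E = {C. is_vrc B W E C \<and> (\<forall>b\<in>B. is_circuit (nbrs E b) (fst C))}"

definition gauge_equiv :: "'b set \<Rightarrow> 'w set \<Rightarrow> ('b \<times> 'w) set \<Rightarrow> ('b, 'w, 'n::finite) config \<Rightarrow> ('b, 'w, 'n::finite) config \<Rightarrow> bool" where
  "gauge_equiv B W E C1 C2 \<longleftrightarrow> (\<exists>lb lw.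
     (\<forall>b\<in>B. lb b \<noteq> (0::complex)) \<and> (\<forall>w\<in>W. lw w \<noteq> (0::complex)) \<and>
     (\<forall>w\<in>W. fst C2 w = lw w *s fst C1 w) \<and>
     (\<forall>(b, w)\<in>E. snd C2 (b, w) = lb b * inverse (lw w) * snd C1 (b, w)))"

definition gauge_rel :: "'b set \<Rightarrow> 'w set \<Rightarrow> ('b \<times> 'w) set \<Rightarrow> (('b, 'w, 'n::finite) config \<times> ('b, 'w, 'n::finite) config) set" where
  "gauge_rel B W E = {(C1, C2). C1 \<in> circuit_configs B W E \<and> C2 \<in> circuit_configs B W E \<and>
     gauge_equiv B W E C1 C2}"

definition proj_map :: "'w set \<Rightarrow> ('b, 'w, 'n::finite) config \<Rightarrow> ('w \<Rightarrow> (complex^'n::finite) set)" where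
  "proj_map W C = restrict (\<lambda>w. proj_pt (fst C w)) W"

end

theory Submission
  imports Defs
begin

lemma proj_pt_scale:
  fixes v :: "complex^'n::finite"
  assumes "c \<noteq> 0" shows "proj_pt (c *s v) = proj_pt v"
proof -
  have "{a *s (c *s v) |a. a \<noteq> 0} = {b *s v |b. b \<noteq> 0}"
  proof (intro set_eqI iffI)
    fix x assume "x \<in> {a *s (c *s v) |a. a \<noteq> 0}"
    then obtain a where "a \<noteq> 0" "x = a *s (c *s v)" by blast
    then show "x \<in> {b *s v |b. b \<noteq> 0}" using assms
      by (auto intro!: exI[of _ "a*c"])
  next
    fix x assume "x \<in> {b *s v |b. b \<noteq> 0}"
    then obtain b where "b \<noteq> 0" "x = b *s v" by blast
    then show "x \<in> {a *s (c *s v) |a. a \<noteq> 0}" using assms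
      by (auto intro!: exI[of _ "b/c"])
  qed
  then show ?thesis unfolding proj_pt_def by simp
qed

lemma in_proj_pt: "v \<in> proj_pt v"
  unfolding proj_pt_def by (auto intro!: exI[of _ 1])

lemma proj_pt_eq:
  assumes "proj_pt u = proj_pt (v :: complex^'n::finite)" shows "\<exists>c. c \<noteq> 0 \<and> u = c *s v"
  using in_proj_pt[of u] assms unfolding proj_pt_def by auto

lemma fam_dep_mono:
  assumes "S \<subseteq> S'" "finite S'" "fam_dependent S V" shows "fam_dependent S' V"
proof -
  obtain c where c: "(\<Sum>w\<in>S. c w *s V w) = 0" "\<exists>w\<in>S. c w \<noteq> 0"
    using assms(3) unfolding fam_dependent_def by blast
  let ?c = "\<lambda>w. if w \<in> S then c w else 0"
  have "(\<Sum>w\<in>S'. ?c w *s V w) = (\<Sum>w\<in>S. ?c w *s V w)"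
    using assms(1,2) by (intro sum.mono_neutral_right) auto
  also have "\<dots> = 0" using c(1) by simp
  finally show ?thesis unfolding fam_dependent_def using c(2) assms(1)
    by (intro exI[of _ ?c]) auto
qed

lemma fam_dep_pair:
  fixes V :: "'w \<Rightarrow> complex^'n::finite"
  assumes "x \<noteq> y" "V x \<noteq> 0" "V y \<noteq> 0"
  shows "fam_dependent {x,y} V \<longleftrightarrow> (\<exists>c. c \<noteq> 0 \<and> V x = c *s V y)"
proof
  assume "fam_dependent {x,y} V"
  then obtain c where c: "c x *s V x + c y *s V y = 0" "c x \<noteq> 0 \<or> c y \<noteq> 0"
    unfolding fam_dependent_def using assms(1) by auto
  have cx: "c x \<noteq> 0"
  proof
    assume "c x = 0" then have "c y *s V y = 0" "c y \<noteq> 0" using c by auto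
    then show False using assms(3) by simp
  qed
  have cy: "c y \<noteq> 0"
  proof
    assume "c y = 0" then have "c x *s V x = 0" using c by auto
    then show False using assms(2) cx by simp
  qed
  have "V x = (- c y / c x) *s V y"
  proof -
    have "c x *s V x = - (c y *s V y)" using c(1) by (simp add: eq_neg_iff_add_eq_0)
    then have "(inverse (c x)) *s (c x *s V x) = (inverse (c x)) *s (- (c y *s V y))" by simp
    then show ?thesis using cx by (simp add: divide_inverse_commute mult.commute)
  qed
  then show "\<exists>c. c \<noteq> 0 \<and> V x = c *s V y" using cx cy by (intro exI[of _ "- c y / c x"]) auto
next
  assume "\<exists>c. c \<noteq> 0 \<and> V x = c *s V y"
  then obtain c where c: "c \<noteq> 0" "V x = c *s V y" by blast
  let ?c = "\<lambda>w. if w = x then 1 else - c"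
  have "(\<Sum>w\<in>{x,y}. ?c w *s V w) = 0" using assms(1) c by simp
  then show "fam_dependent {x,y} V" unfolding fam_dependent_def
    by (intro exI[of _ ?c]) auto
qed

lemma circuit_nonzero:
  assumes "finite S" "is_circuit S V" "(\<Sum>w\<in>S. \<mu> w *s V w) = 0" "\<exists>w\<in>S. \<mu> w \<noteq> 0" "z \<in> S"
  shows "\<mu> z \<noteq> 0"
proof
  assume z: "\<mu> z = 0"
  have "(\<Sum>w\<in>S - {z}. \<mu> w *s V w) = (\<Sum>w\<in>S. \<mu> w *s V w)"
    using assms(1,5) z by (intro sum.mono_neutral_left) auto
  then have "fam_dependent (S - {z}) V" unfolding fam_dependent_def using assms(3,4) z
    by (intro exI[of _ \<mu>]) auto
  moreover have "S - {z} \<subset> S" using assms(5) by auto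
  ultimately show False using assms(2) unfolding is_circuit_def by blast
qed

lemma circuit_unique:
  assumes "finite S" "is_circuit S V"
    "(\<Sum>w\<in>S. \<mu>1 w *s V w) = 0" "\<exists>w\<in>S. \<mu>1 w \<noteq> 0"
    "(\<Sum>w\<in>S. \<mu>2 w *s V w) = 0" "\<exists>w\<in>S. \<mu>2 w \<noteq> 0"
  shows "\<exists>k. k \<noteq> 0 \<and> (\<forall>w\<in>S. \<mu>2 w = k * \<mu>1 w)"
proof -
  obtain a where a: "a \<in> S" using assms(4) by blast
  have n1: "\<And>w. w \<in> S \<Longrightarrow> \<mu>1 w \<noteq> 0" using circuit_nonzero[OF assms(1,2,3,4)] by blast
  have n2: "\<And>w. w \<in> S \<Longrightarrow> \<mu>2 w \<noteq> 0" using circuit_nonzero[OF assms(1,2,5,6)] by blast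
  define k where "k = \<mu>2 a / \<mu>1 a"
  define r where "r = (\<lambda>w. \<mu>2 w - k * \<mu>1 w)"
  have "(\<Sum>w\<in>S. r w *s V w) = (\<Sum>w\<in>S. \<mu>2 w *s V w) - k *s (\<Sum>w\<in>S. \<mu>1 w *s V w)"
    unfolding r_def by (simp add: vector_sub_rdistrib sum_subtractf vec.scale_sum_right)
  also have "\<dots> = 0" using assms(3,5) by simp
  finally have rs: "(\<Sum>w\<in>S. r w *s V w) = 0" .
  have ra: "r a = 0" unfolding r_def k_def using n1[OF a] by simp
  have "\<forall>w\<in>S. r w = 0"
  proof (rule ccontr)
    assume "\<not> (\<forall>w\<in>S. r w = 0)"
    then have "\<exists>w\<in>S. r w \<noteq> 0" by blast
    then have "r a \<noteq> 0" using circuit_nonzero[OF assms(1,2) rs _ a] by blast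
    then show False using ra by simp
  qed
  moreover have "k \<noteq> 0" unfolding k_def using n1[OF a] n2[OF a] by simp
  ultimately show ?thesis unfolding r_def by (intro exI[of _ k]) auto
qed

lemma fam_dep_vec:
  fixes V :: "'w \<Rightarrow> complex^'n::finite"
  assumes "finite S" "inj_on V S"
  shows "fam_dependent S V \<longleftrightarrow> vec.dependent (V ` S)"
proof
  assume "fam_dependent S V"
  then obtain c where c: "(\<Sum>w\<in>S. c w *s V w) = 0" "\<exists>w\<in>S. c w \<noteq> 0"
    unfolding fam_dependent_def by blast
  define u where "u = (\<lambda>v. c (the_inv_into S V v))"
  have uV: "u (V w) = c w" if "w \<in> S" for w
    unfolding u_def using the_inv_into_f_f[OF assms(2) that] by simp
  have "(\<Sum>v\<in>V ` S. u v *s v) = (\<Sum>w\<in>S. u (V w) *s V w)"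
    using sum.reindex[OF assms(2), of "\<lambda>v. u v *s v"] unfolding comp_def .
  also have "\<dots> = (\<Sum>w\<in>S. c w *s V w)"
    by (rule sum.cong[OF refl]) (simp add: uV)
  finally have s: "(\<Sum>v\<in>V ` S. u v *s v) = 0" using c by simp
  obtain w where w: "w \<in> S" "c w \<noteq> 0" using c(2) by blast
  have "V w \<in> V ` S" "u (V w) \<noteq> 0" using w uV by auto
  then have "\<exists>v\<in>V ` S. u v \<noteq> 0" by blast
  then show "vec.dependent (V ` S)" using vec.dependent_finite[of "V ` S"] assms(1) s by blast
next
  assume "vec.dependent (V ` S)"
  then obtain u where u: "\<exists>v\<in>V ` S. u v \<noteq> 0" "(\<Sum>v\<in>V ` S. u v *s v) = 0"
    using vec.dependent_finite[of "V ` S"] assms(1) by blast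
  have "(\<Sum>v\<in>V ` S. u v *s v) = (\<Sum>w\<in>S. u (V w) *s V w)"
    using sum.reindex[OF assms(2), of "\<lambda>v. u v *s v"] unfolding comp_def .
  then have s: "(\<Sum>w\<in>S. u (V w) *s V w) = 0" using u(2) by simp
  obtain w where "w \<in> S" "u (V w) \<noteq> 0" using u(1) by blast
  then show "fam_dependent S V" unfolding fam_dependent_def using s
    by (intro exI[of _ "\<lambda>w. u (V w)"]) auto
qed

lemma nbrs_facts:
  assumes "btb_graph B W E" "b \<in> B"
  shows "finite (nbrs E b)" "nbrs E b \<subseteq> W" "card (nbrs E b) = 3"
proof -
  show c: "card (nbrs E b) = 3" using assms unfolding btb_graph_def by blast
  show "finite (nbrs E b)" by (rule card_ge_0_finite) (simp add: c)
  show "nbrs E b \<subseteq> W" using assms unfolding btb_graph_def nbrs_def by blast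
qed

lemma gauge_proj:
  assumes "gauge_equiv B W E C1 C2"
  shows "proj_map W C1 = proj_map W C2"
proof -
  obtain lb lw where l: "\<forall>w\<in>W. lw w \<noteq> (0::complex)" "\<forall>w\<in>W. fst C2 w = lw w *s fst C1 w"
    using assms unfolding gauge_equiv_def by blast
  show ?thesis unfolding proj_map_def
    by (rule ext) (simp add: l proj_pt_scale)
qed

lemma proj_gauge:
  assumes G: "btb_graph B W E" and C1: "C1 \<in> circuit_configs B W E" and C2: "C2 \<in> circuit_configs B W E"
    and P: "proj_map W C1 = proj_map W C2"
  shows "gauge_equiv B W E C1 C2"
proof -
  obtain V1 \<mu>1 where c1: "C1 = (V1, \<mu>1)" by (cases C1)
  obtain V2 \<mu>2 where c2: "C2 = (V2, \<mu>2)" by (cases C2)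
  have exw: "\<forall>w\<in>W. \<exists>c. c \<noteq> 0 \<and> V2 w = c *s V1 w"
  proof
    fix w assume "w \<in> W"
    then have "proj_pt (V2 w) = proj_pt (V1 w)"
      using fun_cong[OF P, of w] c1 c2 unfolding proj_map_def by simp
    then show "\<exists>c. c \<noteq> 0 \<and> V2 w = c *s V1 w" by (rule proj_pt_eq)
  qed
  obtain lw where lw: "\<forall>w\<in>W. lw w \<noteq> 0 \<and> V2 w = lw w *s V1 w"
    using bchoice[OF exw] by blast
  have exb: "\<forall>b\<in>B. \<exists>k. k \<noteq> 0 \<and> (\<forall>w\<in>nbrs E b. \<mu>2 (b,w) * lw w = k * \<mu>1 (b,w))"
  proof
    fix b assume b: "b \<in> B"
    note nf = nbrs_facts[OF G b]
    have r1: "(\<Sum>w\<in>nbrs E b. \<mu>1 (b,w) *s V1 w) = 0" "\<exists>w\<in>nbrs E b. \<mu>1 (b,w) \<noteq> 0"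
      "is_circuit (nbrs E b) V1"
      using C1 b c1 unfolding circuit_configs_def is_vrc_def by auto
    have r2: "(\<Sum>w\<in>nbrs E b. \<mu>2 (b,w) *s V2 w) = 0" "\<exists>w\<in>nbrs E b. \<mu>2 (b,w) \<noteq> 0"
      using C2 b c2 unfolding circuit_configs_def is_vrc_def by auto
    have "(\<Sum>w\<in>nbrs E b. (\<mu>2 (b,w) * lw w) *s V1 w) = (\<Sum>w\<in>nbrs E b. \<mu>2 (b,w) *s V2 w)"
      using nf(2) lw by (intro sum.cong) auto
    then have s: "(\<Sum>w\<in>nbrs E b. (\<mu>2 (b,w) * lw w) *s V1 w) = 0" using r2 by simp
    have nz: "\<exists>w\<in>nbrs E b. \<mu>2 (b,w) * lw w \<noteq> 0" using r2(2) nf(2) lw by auto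
    show "\<exists>k. k \<noteq> 0 \<and> (\<forall>w\<in>nbrs E b. \<mu>2 (b,w) * lw w = k * \<mu>1 (b,w))"
      using circuit_unique[OF nf(1) r1(3) r1(1) r1(2), of "\<lambda>w. \<mu>2 (b,w) * lw w", OF s nz] by simp
  qed
  obtain lb where lb: "\<forall>b\<in>B. lb b \<noteq> 0 \<and> (\<forall>w\<in>nbrs E b. \<mu>2 (b,w) * lw w = lb b * \<mu>1 (b,w))"
    using bchoice[OF exb] by blast
  have E: "E \<subseteq> B \<times> W" using G unfolding btb_graph_def by blast
  have "\<forall>(b, w)\<in>E. \<mu>2 (b, w) = lb b * inverse (lw w) * \<mu>1 (b, w)"
  proof (clarify)
    fix b w assume bw: "(b,w) \<in> E"
    then have b: "b \<in> B" and w: "w \<in> W" and wn: "w \<in> nbrs E b" using E by (auto simp: nbrs_def)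
    have "\<mu>2 (b,w) * lw w = lb b * \<mu>1 (b,w)" using lb b wn by blast
    moreover have "lw w \<noteq> 0" using lw w by blast
    ultimately show "\<mu>2 (b, w) = lb b * inverse (lw w) * \<mu>1 (b, w)"
      by (simp add: field_simps)
  qed
  then show ?thesis unfolding gauge_equiv_def c1 c2 fst_conv snd_conv
    apply (intro exI[of _ lb] exI[of _ lw] conjI)
    subgoal using lb by simp
    subgoal using lw by simp
    subgoal using lw by simp
    by assumption
qed


lemma proj_pt_sub_span:
  assumes "v \<in> vec.span X" shows "proj_pt (v :: complex^'n::finite) \<subseteq> vec.span X"
  unfolding proj_pt_def using assms vec.span_scale by blast

lemma two_indep:
  fixes a b :: "complex^'n::finite"
  assumes "a \<noteq> 0" "b \<noteq> 0" "\<not> (\<exists>c. c \<noteq> 0 \<and> a = c *s b)"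
  shows "vec.independent {a, b}" "a \<noteq> b"
proof -
  show ab: "a \<noteq> b" using assms(3) by (metis vector_smult_lid one_neq_zero)
  have ib: "vec.independent {b}"
    using vec.independent_insert[of b "{}"] assms(2) by simp
  have "a \<notin> vec.span {b}"
  proof
    assume "a \<in> vec.span {b}"
    then obtain k where k: "a = k *s b" unfolding vec.span_singleton by blast
    then have "k \<noteq> 0" using assms(1) by auto
    then show False using k assms(3) by blast
  qed
  then show "vec.independent {a, b}"
    using vec.independent_insert[of a "{b}"] ab ib by simp
qed

lemma circ_tcd:
  assumes G: "btb_graph B W E" and C: "C \<in> circuit_configs B W E"
  shows "proj_map W C \<in> (tcd_maps B W E :: ('w \<Rightarrow> (complex^'n::finite) set) set)"
proof -
  obtain V \<mu> where c: "C = (V, \<mu>)" by (cases C)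
  have Vnz: "\<forall>w\<in>W. V w \<noteq> (0::complex^'n)" using C c unfolding circuit_configs_def is_vrc_def by auto
  have rel: "\<forall>b\<in>B. (\<Sum>w\<in>nbrs E b. \<mu> (b, w) *s V w) = 0 \<and> (\<exists>w\<in>nbrs E b. \<mu> (b, w) \<noteq> 0)"
    using C c unfolding circuit_configs_def is_vrc_def by auto
  have circ: "\<forall>b\<in>B. is_circuit (nbrs E b) V" using C c unfolding circuit_configs_def by auto
  have pm: "proj_map W C w = proj_pt (V w)" if "w \<in> W" for w
    unfolding proj_map_def c using that by simp
  have ext: "proj_map W C \<in> extensional W" unfolding proj_map_def by simp
  have sp: "\<forall>w\<in>W. proj_map W C w \<in> proj_space"
    using Vnz pm unfolding proj_space_def by blast
  have blk: "(\<forall>w1\<in>nbrs E b. \<forall>w2\<in>nbrs E b. w1 \<noteq> w2 \<longrightarrow> proj_map W C w1 \<noteq> proj_map W C w2) \<and>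
             on_common_line (proj_map W C ` nbrs E b)" if b: "b \<in> B" for b
  proof -
    note nf = nbrs_facts[OF G b]
    define S where "S = nbrs E b"
    have np: "\<not> (\<exists>k. k \<noteq> 0 \<and> V w1 = k *s V w2)" if w: "w1 \<in> S" "w2 \<in> S" "w1 \<noteq> w2" for w1 w2
    proof
      assume "\<exists>k. k \<noteq> 0 \<and> V w1 = k *s V w2"
      then have "fam_dependent {w1, w2} V"
        using fam_dep_pair[of w1 w2 V] w Vnz nf(2) unfolding S_def by blast
      moreover have "{w1, w2} \<subset> S"
      proof -
        have "card {w1, w2} = 2" using w(3) by simp
        moreover have "{w1, w2} \<subseteq> S" using w by auto
        moreover have "card S = 3" using nf(3) unfolding S_def .
        ultimately show ?thesis by (metis psubsetI numeral_eq_iff semiring_norm(88))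
      qed
      ultimately show False using circ b unfolding is_circuit_def S_def by blast
    qed
    have d1: "\<forall>w1\<in>S. \<forall>w2\<in>S. w1 \<noteq> w2 \<longrightarrow> proj_map W C w1 \<noteq> proj_map W C w2"
    proof (intro ballI impI)
      fix w1 w2 assume w: "w1 \<in> S" "w2 \<in> S" "w1 \<noteq> w2"
      show "proj_map W C w1 \<noteq> proj_map W C w2"
      proof
        assume "proj_map W C w1 = proj_map W C w2"
        then have "proj_pt (V w1) = proj_pt (V w2)" using pm w nf(2) unfolding S_def by auto
        then show False using proj_pt_eq np[OF w] by blast
      qed
    qed
    obtain x y z where xyz: "S = {x, y, z}" "x \<noteq> y" "y \<noteq> z" "x \<noteq> z"
      using nf(3) card_3_iff unfolding S_def by metis
    have inS: "x \<in> S" "y \<in> S" "z \<in> S" using xyz by auto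
    have SW: "S \<subseteq> W" using nf(2) unfolding S_def .
    define L where "L = vec.span {V x, V y}"
    have ind: "vec.independent {V x, V y}" "V x \<noteq> V y"
      using two_indep[of "V x" "V y"] Vnz SW inS np[of x y] xyz by auto
    have dimL: "vec.dim L = 2" unfolding L_def using vec.dim_span_eq_card_independent[OF ind(1)] ind(2) by simp
    have Vx: "V x \<in> L" "V y \<in> L" unfolding L_def by (auto intro: vec.span_base)
    have r: "(\<Sum>w\<in>S. \<mu> (b, w) *s V w) = 0" "\<exists>w\<in>S. \<mu> (b, w) \<noteq> 0"
      using rel b unfolding S_def by auto
    have mz: "\<mu> (b, z) \<noteq> 0"
      using circuit_nonzero[of S V "\<lambda>w. \<mu> (b, w)" z] nf(1) circ b r inS unfolding S_def by blast
    have "(\<Sum>w\<in>S. \<mu> (b, w) *s V w) = \<mu> (b, x) *s V x + (\<mu> (b, y) *s V y + \<mu> (b, z) *s V z)"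
      using xyz by simp
    then have h: "\<mu> (b, x) *s V x + (\<mu> (b, y) *s V y + \<mu> (b, z) *s V z) = 0" using r by simp
    have "\<mu> (b, z) *s V z = (\<mu> (b, x) *s V x + (\<mu> (b, y) *s V y + \<mu> (b, z) *s V z))
       - \<mu> (b, x) *s V x - \<mu> (b, y) *s V y" by (simp add: algebra_simps)
    then have h2: "\<mu> (b, z) *s V z = - (\<mu> (b, x) *s V x) - \<mu> (b, y) *s V y" using h by simp
    have "V z = inverse (\<mu> (b, z)) *s (\<mu> (b, z) *s V z)" using mz by simp
    also have "\<dots> = inverse (\<mu> (b, z)) *s (- (\<mu> (b, x) *s V x) - \<mu> (b, y) *s V y)" using h2 by simp
    finally have "V z \<in> L" using Vx
      by (simp add: vec.span_scale vec.span_diff vec.span_neg L_def)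
    then have VL: "\<forall>w\<in>S. V w \<in> L" using Vx xyz by auto
    have "on_common_line (proj_map W C ` S)"
      unfolding on_common_line_def
    proof (intro exI[of _ L] conjI)
      show "vec.subspace L" unfolding L_def by simp
      show "vec.dim L = 2" by (rule dimL)
      show "\<forall>p\<in>proj_map W C ` S. p \<subseteq> L"
      proof
        fix p assume "p \<in> proj_map W C ` S"
        then obtain w where w: "w \<in> S" "p = proj_pt (V w)" using pm SW by auto
        show "p \<subseteq> L" using proj_pt_sub_span[of "V w" "{V x, V y}"] VL w unfolding L_def by simp
      qed
    qed
    then show ?thesis using d1 unfolding S_def by blast
  qed
  show ?thesis unfolding tcd_maps_def using ext sp blk by blast
qed


lemma tcd_circ:
  assumes G: "btb_graph B W E" and T: "T \<in> (tcd_maps B W E :: ('w \<Rightarrow> (complex^'n::finite) set) set)"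
  shows "\<exists>C\<in>(circuit_configs B W E :: ('b, 'w, 'n) config set). proj_map W C = T"
proof -
  have Text: "T \<in> extensional W" and Tsp: "\<forall>w\<in>W. T w \<in> proj_space"
    and Tb: "\<forall>b\<in>B. (\<forall>w1\<in>nbrs E b. \<forall>w2\<in>nbrs E b. w1 \<noteq> w2 \<longrightarrow> T w1 \<noteq> T w2) \<and>
             on_common_line (T ` nbrs E b)"
    using T unfolding tcd_maps_def by auto
  have exv: "\<forall>w\<in>W. \<exists>v. v \<noteq> 0 \<and> T w = proj_pt (v :: complex^'n)"
    using Tsp unfolding proj_space_def by blast
  obtain V where V: "\<forall>w\<in>W. V w \<noteq> 0 \<and> T w = proj_pt (V w :: complex^'n)"
    using bchoice[OF exv] by blast
  have blk: "fam_dependent (nbrs E b) V \<and> is_circuit (nbrs E b) V" if b: "b \<in> B" for b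
  proof -
    note nf = nbrs_facts[OF G b]
    define S where "S = nbrs E b"
    have SW: "S \<subseteq> W" using nf(2) unfolding S_def .
    have np: "\<not> fam_dependent {w1, w2} V" if w: "w1 \<in> S" "w2 \<in> S" "w1 \<noteq> w2" for w1 w2
    proof
      assume "fam_dependent {w1, w2} V"
      then obtain k where k: "k \<noteq> 0" "V w1 = k *s V w2"
        using fam_dep_pair[of w1 w2 V] w V SW by blast
      have w12: "w1 \<in> W" "w2 \<in> W" using SW w by auto
      have t1: "T w1 = proj_pt (V w1)" using V w12(1) by blast
      have t2: "T w2 = proj_pt (V w2)" using V w12(2) by blast
      have "T w1 = T w2" unfolding t1 t2 k(2) by (rule proj_pt_scale[OF k(1)])
      then show False using Tb b w unfolding S_def by blast
    qed
    have inj: "inj_on V S"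
    proof (rule inj_onI, rule ccontr)
      fix w1 w2 assume w: "w1 \<in> S" "w2 \<in> S" "V w1 = V w2" "w1 \<noteq> w2"
      have "fam_dependent {w1, w2} V"
      proof -
        have w12: "w1 \<in> W" "w2 \<in> W" using SW w by auto
        have "V w1 = 1 *s V w2" unfolding vector_smult_lid by (rule w(3))
        moreover have "V w1 \<noteq> 0" "V w2 \<noteq> 0" using V w12 by auto
        ultimately show ?thesis using fam_dep_pair[of w1 w2 V] w(4) by (meson one_neq_zero)
      qed
      then show False using np w by blast
    qed
    have ocl: "on_common_line (T ` S)" using Tb b unfolding S_def by blast
    obtain L where L: "vec.subspace L" "vec.dim L = 2" "\<forall>p\<in>T ` S. p \<subseteq> L"
      using ocl unfolding on_common_line_def by blast
    have VL: "V ` S \<subseteq> L"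
    proof
      fix v assume "v \<in> V ` S"
      then obtain w where w: "w \<in> S" "v = V w" by blast
      have "V w \<in> T w" using V SW w in_proj_pt by auto
      then show "v \<in> L" using L(3) w by blast
    qed
    have cS: "card (V ` S) = 3" using card_image[OF inj] nf(3) unfolding S_def by simp
    have "vec.dependent (V ` S)"
    proof (rule ccontr)
      assume "\<not> vec.dependent (V ` S)"
      then have "card (V ` S) \<le> vec.dim L" using vec.independent_card_le_dim[OF VL] by blast
      then show False using cS L(2) by simp
    qed
    then have dep: "fam_dependent S V" using fam_dep_vec[OF nf(1)[folded S_def] inj] by blast
    obtain x y z where xyz: "S = {x, y, z}" "x \<noteq> y" "y \<noteq> z" "x \<noteq> z"
      using nf(3) card_3_iff unfolding S_def by metis
    have "\<not> fam_dependent S' V" if "S' \<subset> S" for S'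
    proof
      assume d: "fam_dependent S' V"
      have "S' \<subseteq> {x, y} \<or> S' \<subseteq> {x, z} \<or> S' \<subseteq> {y, z}" using that xyz by blast
      then show False using d fam_dep_mono[of S' _ V] np xyz by blast
    qed
    then show ?thesis using dep unfolding S_def is_circuit_def by blast
  qed
  have exm: "\<forall>b\<in>B. \<exists>c. (\<Sum>w\<in>nbrs E b. c w *s V w) = 0 \<and> (\<exists>w\<in>nbrs E b. c w \<noteq> 0)"
    using blk unfolding fam_dependent_def by blast
  obtain m where m: "\<forall>b\<in>B. (\<Sum>w\<in>nbrs E b. m b w *s V w) = 0 \<and> (\<exists>w\<in>nbrs E b. m b w \<noteq> 0)"
    using bchoice[OF exm] by blast
  define C :: "('b, 'w, 'n) config" where "C = (V, \<lambda>(b, w). m b w)"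
  have "C \<in> circuit_configs B W E"
    unfolding circuit_configs_def is_vrc_def C_def using V m blk by auto
  moreover have "proj_map W C = T"
  proof
    fix w show "proj_map W C w = T w"
    proof (cases "w \<in> W")
      case True then show ?thesis unfolding proj_map_def C_def using V by simp
    next
      case False then show ?thesis unfolding proj_map_def using extensional_arb[OF Text False] by simp
    qed
  qed
  ultimately show ?thesis by blast
qed


theorem proposition3p3:
  fixes B :: "'b set" and W :: "'w set" and E :: "('b \<times> 'w) set" and d :: nat
  assumes "btb_graph B W E" and "d \<ge> 1" and "CARD('n) = d + 1"
  shows "(\<forall>C1\<in>(circuit_configs B W E :: ('b, 'w, 'n::finite) config set). \<forall>C2\<in>circuit_configs B W E.
            gauge_equiv B W E C1 C2 \<longrightarrow> proj_map W C1 = proj_map W C2)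
       \<and> bij_betw (\<lambda>X. THE T. \<exists>C\<in>X. T = proj_map W C)
           (circuit_configs B W E // gauge_rel B W E)
           (tcd_maps B W E :: ('w \<Rightarrow> (complex^'n::finite) set) set)"
proof -
  note G = assms(1)
  define A where "A = (circuit_configs B W E :: ('b, 'w, 'n::finite) config set)"
  define r where "r = (gauge_rel B W E :: (('b, 'w, 'n::finite) config \<times> ('b, 'w, 'n::finite) config) set)"
  define f where "f = (\<lambda>X. THE T. \<exists>C\<in>(X :: ('b, 'w, 'n::finite) config set). T = (proj_map W C :: 'w \<Rightarrow> (complex^'n::finite) set))"
  have rr: "(C1, C2) \<in> r \<longleftrightarrow> C1 \<in> A \<and> C2 \<in> A \<and> proj_map W C1 = proj_map W C2" for C1 C2
  proof
    assume "(C1, C2) \<in> r"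
    then have "C1 \<in> A" "C2 \<in> A" "gauge_equiv B W E C1 C2" unfolding r_def gauge_rel_def A_def by auto
    then show "C1 \<in> A \<and> C2 \<in> A \<and> proj_map W C1 = proj_map W C2" using gauge_proj by blast
  next
    assume h: "C1 \<in> A \<and> C2 \<in> A \<and> proj_map W C1 = proj_map W C2"
    then have "gauge_equiv B W E C1 C2" using proj_gauge[OF G] unfolding A_def by blast
    then show "(C1, C2) \<in> r" using h unfolding r_def gauge_rel_def A_def by blast
  qed
  have fC: "f (r `` {C}) = proj_map W C" if C: "C \<in> A" for C
    unfolding f_def
  proof (rule the_equality)
    have "C \<in> r `` {C}" using rr C by blast
    then show "\<exists>C'\<in>r `` {C}. proj_map W C = proj_map W C'" by blast
  next
    fix T assume "\<exists>C'\<in>r `` {C}. T = proj_map W C'"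
    then obtain C' where "(C, C') \<in> r" "T = proj_map W C'" by blast
    then show "T = proj_map W C" using rr by metis
  qed
  have part1: "\<forall>C1\<in>A. \<forall>C2\<in>A. gauge_equiv B W E C1 C2 \<longrightarrow> proj_map W C1 = proj_map W C2"
    using gauge_proj by blast
  have inj: "inj_on f (A // r)"
  proof (rule inj_onI)
    fix X Y assume X: "X \<in> A // r" and Y: "Y \<in> A // r" and fXY: "f X = f Y"
    obtain C1 where C1: "X = r `` {C1}" "C1 \<in> A" using X by (rule quotientE)
    obtain C2 where C2: "Y = r `` {C2}" "C2 \<in> A" using Y by (rule quotientE)
    have pe: "proj_map W C1 = proj_map W C2" using fXY fC C1 C2 by metis
    show "X = Y"
    proof -
      have "(C1, C') \<in> r \<longleftrightarrow> (C2, C') \<in> r" for C'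
        using rr pe C1(2) C2(2) by metis
      then show ?thesis using C1(1) C2(1) by blast
    qed
  qed
  have img: "f ` (A // r) = (tcd_maps B W E :: ('w \<Rightarrow> (complex^'n::finite) set) set)"
  proof
    show "f ` (A // r) \<subseteq> tcd_maps B W E"
    proof
      fix T assume "T \<in> f ` (A // r)"
      then obtain X where X: "X \<in> A // r" "T = f X" by blast
      obtain C where C: "X = r `` {C}" "C \<in> A" using X(1) by (rule quotientE)
      have "T = proj_map W C" using X(2) C fC by simp
      then show "T \<in> tcd_maps B W E" using circ_tcd[OF G] C(2) unfolding A_def by simp
    qed
  next
    show "tcd_maps B W E \<subseteq> f ` (A // r)"
    proof
      fix T :: "'w \<Rightarrow> (complex^'n::finite) set" assume "T \<in> tcd_maps B W E"
      then obtain C where C: "C \<in> A" "proj_map W C = T" using tcd_circ[OF G] unfolding A_def by blast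
      have "r `` {C} \<in> A // r" using C(1) by (rule quotientI)
      moreover have "f (r `` {C}) = T" using fC C by simp
      ultimately show "T \<in> f ` (A // r)" by (metis image_eqI)
    qed
  qed
  have "bij_betw f (A // r) (tcd_maps B W E :: ('w \<Rightarrow> (complex^'n::finite) set) set)"
    unfolding bij_betw_def using inj img by blast
  then show ?thesis using part1 unfolding A_def r_def f_def by blast
qed

end
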